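(* Let $G=(V,A)$ and $\mathfrak n=\mathfrak n(G)$ be as below. If $\omega=\sum_{e\in V,\alpha\in A}\lambda_{e,\alpha}\,e\wedge\alpha\in(W\wedge\mathfrak z)^{\mathfrak n}$, then $\lambda_{e,\alpha}=0$ for every $\alpha\in A$ and every vertex $e$ with $|e|\ge 2$.
   Context: $G=(V,A)$ is a finite simple graph without loops and without isolated vertices, with vertices $V=\{e_1,\dots,e_n\}$ ordered; each edge $\alpha$ joining $e_i,e_j$ with $i<j$ is oriented from $e_i$ to $e_j$. The graph algebra $\mathfrak n(G)$ over a field $k$ of characteristic zero has basis $V\cup A$ with $[e_i,e_j]=\alpha$ if $\alpha$ goes from $e_i$ to $e_j$, $[e_i,e_j]=0$ if $e_i,e_j$ are not adjacent, and all edges central; $\mathfrak z=\mathrm{span}(A)$ is its center and $W=\mathrm{span}(V)$. $|e|$ is the degree of $e$. Invariants are with respect to $\mathrm{ad}_x(a\wedge b)=[x,a]\wedge b+a\wedge[x,b]$. *)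

theory Defs
  imports Main
begin

text \<open>An edge joining i < j is represented by the pair (i,j), oriented from i to j.
  Basis of n(G): Inl v for vertices, Inr (i,j) for edges.
  Vectors of n(G) are coefficient functions on the basis (zero off the basis);
  elements of the exterior square are represented as alternating coefficient
  functions w p q (the standard identification of the exterior square with
  alternating 2-tensors), with a wedge b given by a p * b q - a q * b p.\<close>

definition graph_ok :: "'v set \<Rightarrow> ('v \<Rightarrow> 'v \<Rightarrow> bool) \<Rightarrow> bool" where
  "graph_ok V E \<longleftrightarrow> finite V \<and> (\<forall>u v. E u v \<longrightarrow> u \<in> V \<and> v \<in> V)
     \<and> (\<forall>u v. E u v \<longrightarrow> E v u) \<and> (\<forall>v. \<not> E v v) \<and> (\<forall>v\<in>V. \<exists>u. E v u)"

definition edges :: "'v::linorder set \<Rightarrow> ('v \<Rightarrow> 'v \<Rightarrow> bool) \<Rightarrow> ('v \<times> 'v) set" where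
  "edges V E = {(i, j). i \<in> V \<and> j \<in> V \<and> i < j \<and> E i j}"

definition gbasis :: "'v::linorder set \<Rightarrow> ('v \<Rightarrow> 'v \<Rightarrow> bool) \<Rightarrow> ('v + 'v \<times> 'v) set" where
  "gbasis V E = Inl ` V \<union> Inr ` edges V E"

definition degree :: "'v set \<Rightarrow> ('v \<Rightarrow> 'v \<Rightarrow> bool) \<Rightarrow> 'v \<Rightarrow> nat" where
  "degree V E e = card {u \<in> V. E e u}"

definition bvec :: "'b \<Rightarrow> 'b \<Rightarrow> 'k::field" where
  "bvec b = (\<lambda>z. if z = b then 1 else 0)"

definition brb :: "('v::linorder \<Rightarrow> 'v \<Rightarrow> bool) \<Rightarrow> 'v + 'v \<times> 'v \<Rightarrow> 'v + 'v \<times> 'v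
                    \<Rightarrow> ('v + 'v \<times> 'v) \<Rightarrow> 'k::field" where
  "brb E a b = (case (a, b) of
      (Inl i, Inl j) \<Rightarrow>
         (if E i j \<and> i < j then bvec (Inr (i, j))
          else if E i j \<and> j < i then (\<lambda>z. - bvec (Inr (j, i)) z)
          else (\<lambda>z. 0))
    | _ \<Rightarrow> (\<lambda>z. 0))"

definition galg :: "'v::linorder set \<Rightarrow> ('v \<Rightarrow> 'v \<Rightarrow> bool) \<Rightarrow> ('v + 'v \<times> 'v \<Rightarrow> 'k::field) set" where
  "galg V E = {x. \<forall>b. b \<notin> gbasis V E \<longrightarrow> x b = 0}"

definition gbracket :: "'v::linorder set \<Rightarrow> ('v \<Rightarrow> 'v \<Rightarrow> bool)
    \<Rightarrow> ('v + 'v \<times> 'v \<Rightarrow> 'k::field) \<Rightarrow> ('v + 'v \<times> 'v \<Rightarrow> 'k) \<Rightarrow> ('v + 'v \<times> 'v \<Rightarrow> 'k)" where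
  "gbracket V E x y = (\<lambda>z. \<Sum>a\<in>gbasis V E. \<Sum>b\<in>gbasis V E. x a * y b * brb E a b z)"

definition wedge :: "('b \<Rightarrow> 'k::field) \<Rightarrow> ('b \<Rightarrow> 'k) \<Rightarrow> 'b \<Rightarrow> 'b \<Rightarrow> 'k" where
  "wedge a b = (\<lambda>p q. a p * b q - a q * b p)"

text \<open>ad_x on the exterior square: the linear extension of
  a wedge b |-> [x,a] wedge b + a wedge [x,b].\<close>
definition ad2 :: "'v::linorder set \<Rightarrow> ('v \<Rightarrow> 'v \<Rightarrow> bool) \<Rightarrow> ('v + 'v \<times> 'v \<Rightarrow> 'k::field)
    \<Rightarrow> ('v + 'v \<times> 'v \<Rightarrow> 'v + 'v \<times> 'v \<Rightarrow> 'k) \<Rightarrow> ('v + 'v \<times> 'v \<Rightarrow> 'v + 'v \<times> 'v \<Rightarrow> 'k)" where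
  "ad2 V E x w = (\<lambda>p q. (\<Sum>r\<in>gbasis V E. gbracket V E x (bvec r) p * w r q)
                      + (\<Sum>r\<in>gbasis V E. gbracket V E x (bvec r) q * w p r))"

definition invariant2 :: "'v::linorder set \<Rightarrow> ('v \<Rightarrow> 'v \<Rightarrow> bool)
    \<Rightarrow> ('v + 'v \<times> 'v \<Rightarrow> 'v + 'v \<times> 'v \<Rightarrow> 'k::field) \<Rightarrow> bool" where
  "invariant2 V E w \<longleftrightarrow> (\<forall>x\<in>galg V E. ad2 V E x w = (\<lambda>p q. 0))"

end

theory Submission imports Defs begin

lemma gbasis_sum:
  assumes "finite V"
  shows "(\<Sum>r\<in>gbasis V E. f r) = (\<Sum>e\<in>V. f (Inl e)) + (\<Sum>a\<in>edges V E. f (Inr a))"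
proof -
  have fe: "finite (edges V E)"
    by (rule finite_subset[of _ "V \<times> V"]) (auto simp: edges_def assms)
  have "(\<Sum>r\<in>gbasis V E. f r) = (\<Sum>r\<in>Inl ` V. f r) + (\<Sum>r\<in>Inr ` edges V E. f r)"
    unfolding gbasis_def using assms fe by (intro sum.union_disjoint) auto
  also have "\<dots> = (\<Sum>e\<in>V. f (Inl e)) + (\<Sum>a\<in>edges V E. f (Inr a))"
    by (simp add: sum.reindex)
  finally show ?thesis .
qed

lemma finite_gbasis: "finite V \<Longrightarrow> finite (gbasis V E)"
  unfolding gbasis_def
  by (rule finite_UnI, simp, rule finite_imageI, rule finite_subset[of _ "V \<times> V"]) (auto simp: edges_def)

lemma gbr:
  assumes "finite V" "a \<in> gbasis V E" "r \<in> gbasis V E"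
  shows "gbracket V E (bvec a) (bvec r) z = (brb E a r z :: 'k::field)"
proof -
  have "gbracket V E (bvec a) (bvec r) z = (\<Sum>a'\<in>gbasis V E. \<Sum>b\<in>gbasis V E.
      (if a' = a then (if b = r then (brb E a' b z :: 'k) else 0) else 0))"
    unfolding gbracket_def bvec_def by (intro sum.cong refl) auto
  also have "\<dots> = (\<Sum>a'\<in>gbasis V E. if a' = a then brb E a r z else 0)"
    using assms finite_gbasis[OF assms(1)] by (intro sum.cong refl) (simp add: sum.delta')
  also have "\<dots> = brb E a r z"
    using assms finite_gbasis[OF assms(1)] by (simp add: sum.delta')
  finally show ?thesis .
qed

lemma brb_val:
  "brb E (Inl u) (Inl e) (Inr g) = (if E u e \<and> u < e \<and> g = (u, e) then 1
     else if E u e \<and> e < u \<and> g = (e, u) then -1 else (0::'k::field))"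
  unfolding brb_def bvec_def by auto

lemma brb_Inr: "brb E a (Inr g) z = 0"
  unfolding brb_def by (cases a) auto

definition S :: "'v::linorder \<Rightarrow> 'v \<Rightarrow> 'k::field" where
  "S u e = (if u < e then 1 else -1)"

definition ed :: "'v::linorder \<Rightarrow> 'v \<Rightarrow> 'v \<times> 'v" where
  "ed u e = (min u e, max u e)"

lemma sumA:
  assumes "finite V" "E u c" "c \<in> V" "u \<noteq> c"
  shows "(\<Sum>e\<in>V. brb E (Inl u) (Inl e) (Inr (ed u c)) * f e) = S u c * (f c :: 'k::field)"
proof -
  have "(\<Sum>e\<in>V. brb E (Inl u) (Inl e) (Inr (ed u c)) * f e) =
        (\<Sum>e\<in>V. if e = c then S u c * f c else 0)"
    using assms by (intro sum.cong refl) (auto simp: brb_val S_def ed_def min_def max_def)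
  also have "\<dots> = S u c * f c" using assms by (simp add: sum.delta')
  finally show ?thesis .
qed

lemma sumB:
  assumes "u \<noteq> a" "u \<noteq> b"
  shows "(\<Sum>e\<in>V. brb E (Inl u) (Inl e) (Inr (a, b)) * f e) = (0 :: 'k::field)"
  using assms by (intro sum.neutral ballI) (simp add: brb_val)

lemma wval:
  fixes lam :: "'v::linorder \<Rightarrow> 'v \<times> 'v \<Rightarrow> 'k::field" and E :: "'v \<Rightarrow> 'v \<Rightarrow> bool"
  assumes "finite V"
  defines "W \<equiv> (\<lambda>p q. \<Sum>e\<in>V. \<Sum>\<alpha>\<in>edges V E.
            lam e \<alpha> * wedge (bvec (Inl e)) (bvec (Inr \<alpha>)) p q)"
  shows "W (Inl e) (Inr a) = (if e \<in> V \<and> a \<in> edges V E then lam e a else 0)"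
    and "W (Inr b) (Inl e) = - (if e \<in> V \<and> b \<in> edges V E then lam e b else 0)"
    and "W (Inr b) (Inr a) = 0"
proof -
  have fe: "finite (edges V E)"
    by (rule finite_subset[of _ "V \<times> V"]) (auto simp: edges_def assms)
  have "W (Inl e) (Inr a) = (\<Sum>e'\<in>V. \<Sum>\<alpha>\<in>edges V E. if e' = e then (if \<alpha> = a then lam e a else 0) else 0)"
    unfolding W_def wedge_def bvec_def by (intro sum.cong refl) (simp add: S_def)
  also have "\<dots> = (\<Sum>e'\<in>V. if e' = e then (if a \<in> edges V E then lam e a else 0) else 0)"
    using fe by (intro sum.cong refl) (simp add: sum.delta')
  finally show "W (Inl e) (Inr a) = (if e \<in> V \<and> a \<in> edges V E then lam e a else 0)"
    using assms by (simp add: sum.delta')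
  have "W (Inr b) (Inl e) = (\<Sum>e'\<in>V. \<Sum>\<alpha>\<in>edges V E. if e' = e then (if \<alpha> = b then - lam e b else 0) else 0)"
    unfolding W_def wedge_def bvec_def by (intro sum.cong refl) (simp add: S_def)
  also have "\<dots> = (\<Sum>e'\<in>V. if e' = e then (if b \<in> edges V E then - lam e b else 0) else 0)"
    using fe by (intro sum.cong refl) (simp add: sum.delta')
  finally show "W (Inr b) (Inl e) = - (if e \<in> V \<and> b \<in> edges V E then lam e b else 0)"
    using assms by (simp add: sum.delta')
  show "W (Inr b) (Inr a) = 0"
    unfolding W_def wedge_def bvec_def by simp
qed

lemma adval:
  fixes lam :: "'v::linorder \<Rightarrow> 'v \<times> 'v \<Rightarrow> 'k::field" and E :: "'v \<Rightarrow> 'v \<Rightarrow> bool"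
  assumes "finite V" "u \<in> V" "a \<in> edges V E" "b \<in> edges V E"
  defines "W \<equiv> (\<lambda>p q. \<Sum>e\<in>V. \<Sum>\<alpha>\<in>edges V E.
            lam e \<alpha> * wedge (bvec (Inl e)) (bvec (Inr \<alpha>)) p q)"
  shows "ad2 V E (bvec (Inl u)) W (Inr b) (Inr a) =
    (\<Sum>e\<in>V. brb E (Inl u) (Inl e) (Inr b) * lam e a) - (\<Sum>e\<in>V. brb E (Inl u) (Inl e) (Inr a) * lam e b)"
proof -
  have ub: "Inl u \<in> gbasis V E" using assms by (simp add: gbasis_def)
  have "ad2 V E (bvec (Inl u)) W (Inr b) (Inr a) =
     (\<Sum>r\<in>gbasis V E. brb E (Inl u) r (Inr b) * W r (Inr a))
      + (\<Sum>r\<in>gbasis V E. brb E (Inl u) r (Inr a) * W (Inr b) r)"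
    unfolding ad2_def by (intro arg_cong2[where f="(+)"] sum.cong refl) (simp_all add: gbr[OF assms(1) ub])
  also have "\<dots> = (\<Sum>e\<in>V. brb E (Inl u) (Inl e) (Inr b) * lam e a)
     + (\<Sum>e\<in>V. brb E (Inl u) (Inl e) (Inr a) * - lam e b)"
  proof -
    have w1: "\<And>e a. W (Inl e) (Inr a) = (if e \<in> V \<and> a \<in> edges V E then lam e a else 0)"
      unfolding W_def by (rule wval(1)[OF assms(1)])
    have w2: "\<And>e b. W (Inr b) (Inl e) = - (if e \<in> V \<and> b \<in> edges V E then lam e b else 0)"
      unfolding W_def by (rule wval(2)[OF assms(1)])
    have w3: "\<And>a b. W (Inr b) (Inr a) = 0"
      unfolding W_def by (rule wval(3)[OF assms(1)])
    show ?thesis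
      unfolding gbasis_sum[OF assms(1)] brb_Inr
      using assms(3,4) by (simp add: w1 w2 w3 cong: sum.cong)
  qed
  also have "\<dots> = (\<Sum>e\<in>V. brb E (Inl u) (Inl e) (Inr b) * lam e a) - (\<Sum>e\<in>V. brb E (Inl u) (Inl e) (Inr a) * lam e b)"
    by (simp add: sum_negf)
  finally show ?thesis .
qed

lemma tri:
  fixes X Y Z s1 s2 s3 :: "'k::field_char_0"
  assumes "s1*s1 = 1" "s2*s2=1" "s3*s3=1"
   "s1 * X - s2 * Y = 0" "s3 * X - (-s2) * Z = 0" "(-s3) * Y - (-s1) * Z = 0"
  shows "X = 0"
proof -
  have "X + X = 0" using assms by algebra
  then show ?thesis by (metis mult_2 zero_neq_numeral mult_eq_0_iff)
qed

lemma S_sq: "u \<noteq> e \<Longrightarrow> S u e * S u e = (1::'k::field)"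
  by (simp add: S_def)
lemma S_anti: "u \<noteq> e \<Longrightarrow> S e u = - (S u e :: 'k::field)"
  by (auto simp: S_def)
lemma S_nz: "S u e \<noteq> (0::'k::field)"
  by (simp add: S_def)
lemma ed_sym: "ed u e = ed e u"
  by (auto simp: ed_def min_def max_def)
lemma ed_edges: "graph_ok V E \<Longrightarrow> E u e \<Longrightarrow> ed u e \<in> edges V E"
proof -
  assume g: "graph_ok V E" and E: "E u e"
  have h: "u \<in> V" "e \<in> V" "E e u" "u \<noteq> e" using g E unfolding graph_ok_def by metis+
  show ?thesis
  proof (cases "u < e")
    case True then show ?thesis using h E by (simp add: ed_def edges_def)
  next
    case False then have "e < u" using h(4) by simp
    then have "min u e = e" "max u e = u" by auto
    then show ?thesis using h E \<open>e < u\<close> by (simp add: ed_def edges_def)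
  qed
qed

theorem mainTheorem9:
  fixes V :: "'v::linorder set" and E :: "'v \<Rightarrow> 'v \<Rightarrow> bool"
    and lam :: "'v \<Rightarrow> 'v \<times> 'v \<Rightarrow> 'k::field_char_0"
  assumes "graph_ok V E"
    and "invariant2 V E (\<lambda>p q. \<Sum>e\<in>V. \<Sum>\<alpha>\<in>edges V E.
            lam e \<alpha> * wedge (bvec (Inl e)) (bvec (Inr \<alpha>)) p q)"
  shows "\<forall>\<alpha>\<in>edges V E. \<forall>e\<in>V. 2 \<le> degree V E e \<longrightarrow> lam e \<alpha> = 0"
proof (intro ballI impI)
  fix \<alpha> e assume \<alpha>: "\<alpha> \<in> edges V E" and eV: "e \<in> V" and deg: "2 \<le> degree V E e"
  have fin: "finite V" and inV: "\<And>u v. E u v \<Longrightarrow> u \<in> V \<and> v \<in> V"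
    and sym: "\<And>u v. E u v \<Longrightarrow> E v u" and irr: "\<And>v. \<not> E v v"
    using assms(1) unfolding graph_ok_def by blast+
  have EQ: "(\<Sum>x\<in>V. brb E (Inl u) (Inl x) (Inr b) * lam x a) - (\<Sum>x\<in>V. brb E (Inl u) (Inl x) (Inr a) * lam x b) = 0"
    if "u \<in> V" "a \<in> edges V E" "b \<in> edges V E" for u a b
  proof -
    have "bvec (Inl u) \<in> (galg V E :: ('v + 'v \<times> 'v \<Rightarrow> 'k) set)"
      using that(1) by (auto simp: galg_def gbasis_def bvec_def)
    with assms(2) have "ad2 V E (bvec (Inl u)) (\<lambda>p q. \<Sum>e\<in>V. \<Sum>\<alpha>\<in>edges V E.
            lam e \<alpha> * wedge (bvec (Inl e)) (bvec (Inr \<alpha>)) p q) = (\<lambda>p q. 0)"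
      unfolding invariant2_def by blast
    then have "ad2 V E (bvec (Inl u)) (\<lambda>p q. \<Sum>e\<in>V. \<Sum>\<alpha>\<in>edges V E.
            lam e \<alpha> * wedge (bvec (Inl e)) (bvec (Inr \<alpha>)) p q) (Inr b) (Inr a) = 0"
      by simp
    then show ?thesis using adval[OF fin that(1) that(2) that(3), of lam] by simp
  qed
  obtain a b where ab: "\<alpha> = (a, b)" "a < b" "E a b" "a \<in> V" "b \<in> V"
    using \<alpha> unfolding edges_def by auto
  have "card {u \<in> V. E e u} \<ge> 2" using deg unfolding degree_def .
  moreover have "finite {u \<in> V. E e u}" using fin by simp
  ultimately have "\<not> (\<forall>x\<in>{u \<in> V. E e u}. \<forall>y\<in>{u \<in> V. E e u}. x = y)"
    using card_le_Suc0_iff_eq by fastforce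
  then obtain n1 n2 where n: "n1 \<noteq> n2" "E e n1" "E e n2" by blast
  show "lam e \<alpha> = 0"
  proof (cases "\<exists>u. E e u \<and> u \<noteq> a \<and> u \<noteq> b")
    case True
    then obtain u where u: "E e u" "u \<noteq> a" "u \<noteq> b" by blast
    have ue: "E u e" "u \<in> V" "u \<noteq> e" using u sym inV irr by blast+
    have "S u e * lam e (a, b) - 0 = (0::'k)"
      using EQ[OF ue(2) \<alpha> ed_edges[OF assms(1) ue(1)]] ab(1)
        sumA[where V=V and E=E and u=u and c=e and f="\<lambda>x. lam x (a,b)", OF fin ue(1) eV ue(3)] sumB[where V=V and E=E and f="\<lambda>x. lam x (ed u e)", OF u(2) u(3)]
      by simp
    then show ?thesis using ab(1) by (simp add: S_def split: if_splits)
  next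
    case False
    then have ea: "E e a" and eb: "E e b" using n by blast+
    have nea: "e \<noteq> a" "e \<noteq> b" "a \<noteq> b" using ea eb ab irr by auto
    have eds: "ed a b = (a, b)" using ab by (simp add: ed_def)
    have e1: "S a e * lam e (a,b) - S a b * lam b (ed a e) = (0::'k)"
      using EQ[OF ab(4) \<alpha> ed_edges[OF assms(1) sym[OF ea]]] ab(1)
        sumA[where V=V and E=E and u=a and c=e and f="\<lambda>x. lam x (a,b)", OF fin sym[OF ea] eV nea(1)[symmetric]]
        sumA[where V=V and E=E and u=a and c=b and f="\<lambda>x. lam x (ed a e)", OF fin ab(3) ab(5) nea(3)] eds by simp
    have eds2: "ed b a = (a, b)" using ab by (simp add: ed_def)
    have e2: "S b e * lam e (a,b) - S b a * lam a (ed b e) = (0::'k)"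
      using EQ[OF ab(5) \<alpha> ed_edges[OF assms(1) sym[OF eb]]] ab(1)
        sumA[where V=V and E=E and u=b and c=e and f="\<lambda>x. lam x (a,b)", OF fin sym[OF eb] eV nea(2)[symmetric]]
        sumA[where V=V and E=E and u=b and c=a and f="\<lambda>x. lam x (ed b e)", OF fin sym[OF ab(3)] ab(4) nea(3)[symmetric]] eds2 by simp
    have e3': "S e b * lam b (ed e a) - S e a * lam a (ed e b) = (0::'k)"
      using EQ[OF eV ed_edges[OF assms(1) ea] ed_edges[OF assms(1) eb]]
        sumA[where V=V and E=E and u=e and c=b and f="\<lambda>x. lam x (ed e a)", OF fin eb ab(5) nea(2)]
        sumA[where V=V and E=E and u=e and c=a and f="\<lambda>x. lam x (ed e b)", OF fin ea ab(4) nea(1)] by simp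
    have e3: "(- S b e) * lam b (ed a e) - (- S a e) * lam a (ed b e) = (0::'k)"
      using e3' nea by (simp add: ed_sym[of e] S_anti[of e])
    have e2': "S b e * lam e (a,b) - (- S a b) * lam a (ed b e) = (0::'k)"
      using e2 nea by (simp add: S_anti[of b a])
    show ?thesis
      using tri[OF S_sq[OF nea(1)[symmetric]] S_sq[OF nea(3)] S_sq[OF nea(2)[symmetric]] e1 e2' e3] ab(1) by simp
  qed
qed

end
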